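(* Let $n\ge 1$ and let $A\in\mathbb{C}^{2^n\times 2^n}$ be a matrix represented by a dictionary data structure with $s_0\ge 1$ data items, i.e. there are non-zero complex numbers $A_0,\dots,A_{s_0-1}$ (data values), sets $S_c(l)\subseteq[0,2^n-1]$ and injective maps $c_l:S_c(l)\to[0,2^n-1]$ ($l\in[0,s_0-1]$) such that the pairs $(c_l(j),j)$, $l\in[0,s_0-1]$, $j\in S_c(l)$, are pairwise distinct and $$A=\sum_{l=0}^{s_0-1}\sum_{j\in S_c(l)}A_l\,\ket{c_l(j)}\bra{j}.$$ Let $m=\lceil\log_2 s_0\rceil$. Consider registers idx ($m$ qubits), del ($1$ qubit) and a system register ($n$ qubits). Suppose $O_c$ is a unitary on idx$\otimes$del$\otimes$system such that for all $l\in[0,2^m-1]$, $j\in[0,2^n-1]$, $$O_c\ket{l}_{\rm idx}\ket{0}_{\rm del}\ket{j}=\begin{cases}\ket{l}_{\rm idx}\ket{0}_{\rm del}\ket{c_l(j)}, & \text{if } l\in[0,s_0-1]\text{ and } j\in S_c(l),\\ \ket{l}_{\rm idx}\ket{1}_{\rm del}\ket{j}, & \text{if } l\in[s_0,2^m-1]\text{ or } j\notin S_c(l),\end{cases}$$ and suppose $\mathrm{PREP},\mathrm{UNPREP}$ are unitaries on the $m$-qubit register idx with $$\mathrm{PREP}\ket{0}^{\otimes m}=\frac{1}{\sqrt{\sum_{l=0}^{s_0-1}|A_l|}}\sum_{l=0}^{s_0-1}\sqrt{A_l}\,\ket{l},\qquad \mathrm{UNPREP}^{\dagger}\ket{0}^{\otimes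 m}=\frac{1}{\sqrt{\sum_{l=0}^{s_0-1}|A_l|}}\sum_{l=0}^{s_0-1}\big(\sqrt{A_l}\big)^{*}\ket{l}.$$ Then $U_A=(\mathrm{UNPREP}\otimes I_{2^{n+1}})\,O_c\,(\mathrm{PREP}\otimes I_{2^{n+1}})$ is a block encoding of $A$ with subnormalization $\alpha=\sum_{l=0}^{s_0-1}|A_l|$, i.e. $$\big(\bra{0}^{\otimes m}_{\rm idx}\bra{0}_{\rm del}\otimes I_{2^n}\big)\,U_A\,\big(\ket{0}^{\otimes m}_{\rm idx}\ket{0}_{\rm del}\otimes I_{2^n}\big)=\frac{A}{\alpha}.$$
   Context: For a complex number $c=|c|e^{\imath\theta}$ (with $\theta$ its argument), the square root is defined as $\sqrt{c}=\sqrt{|c|}\,e^{\imath\theta/2}$; $(\cdot)^*$ denotes complex conjugation. $[a,b]=\{a,a+1,\dots,b\}$. $\ket{j}$ denotes the computational basis state encoding the binary representation of the integer $j$; $I_N$ is the $N\times N$ identity. *)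

theory Defs
  imports "Jordan_Normal_Form.Schur_Decomposition"
begin

definition unitary_mat :: "nat \<Rightarrow> complex mat \<Rightarrow> bool" where
  "unitary_mat N U \<longleftrightarrow> U \<in> carrier_mat N N \<and>
     mat_adjoint U * U = 1\<^sub>m N \<and> U * mat_adjoint U = 1\<^sub>m N"

text \<open>Kronecker product U \<otimes> I_k (U acts on the most significant factor).\<close>
definition kron_id :: "complex mat \<Rightarrow> nat \<Rightarrow> complex mat" where
  "kron_id U k = mat (dim_row U * k) (dim_col U * k)
     (\<lambda>(i,j). if i mod k = j mod k then U $$ (i div k, j div k) else 0)"

abbreviation ket :: "nat \<Rightarrow> nat \<Rightarrow> complex vec" where
  "ket N j \<equiv> unit_vec N j"

text \<open>The isometry |0...0>_anc \<otimes> I_d : C^d \<rightarrow> C^(a*d), ancilla register of dimension a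
  being the most significant factor.\<close>
definition anc_zero_iso :: "nat \<Rightarrow> nat \<Rightarrow> complex mat" where
  "anc_zero_iso a d = mat (a * d) d (\<lambda>(i,j). if i = j then 1 else 0)"

end

theory Submission
  imports Defs
begin

lemma adj_index[simp]:
  fixes A :: "complex mat"
  shows "i < dim_col A \<Longrightarrow> j < dim_row A \<Longrightarrow> mat_adjoint A $$ (i,j) = cnj (A $$ (j,i))"
    and "dim_row (mat_adjoint A) = dim_col A" and "dim_col (mat_adjoint A) = dim_row A"
  unfolding mat_adjoint_def by (auto simp: mat_of_rows_def)

lemma mat_unit_index:
  fixes A :: "complex mat"
  assumes "A \<in> carrier_mat n n" "a < n" "b < n"
  shows "(A *\<^sub>v unit_vec n b) $ a = A $$ (a,b)"
proof -
  have "(A *\<^sub>v unit_vec n b) $ a = (\<Sum>i\<in>{0..<n}. A $$ (a,i) * (if i = b then 1 else 0))"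
    using assms by (simp add: scalar_prod_def)
  also have "\<dots> = A $$ (a,b)" using assms(3) by (simp add: if_distrib cong: if_cong)
  finally show ?thesis .
qed

lemma sum_split_blocks:
  fixes f :: "nat \<Rightarrow> 'b::comm_monoid_add"
  shows "(\<Sum>b<a*K. f b) = (\<Sum>l<a. \<Sum>r<K. f (l*K+r))"
proof (induction a)
  case 0 then show ?case by simp
next
  case (Suc a)
  have "{..<Suc a * K} = {..<a*K} \<union> {a*K..<a*K+K}" by auto
  hence "(\<Sum>b<Suc a*K. f b) = (\<Sum>b<a*K. f b) + (\<Sum>b\<in>{a*K..<a*K+K}. f b)"
    by (simp add: sum.union_disjoint ivl_disj_int)
  also have "(\<Sum>b\<in>{a*K..<a*K+K}. f b) = (\<Sum>r<K. f (a*K+r))"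
    by (rule sum.reindex_bij_witness[where i="\<lambda>r. a*K+r" and j="\<lambda>b. b - a*K"]) auto
  finally show ?case using Suc by simp
qed

lemma lt_pow: assumes "x \<in> {0..(2::nat)^n-1}" shows "x < 2^n"
proof -
  have "(0::nat) < 2^n" by simp
  moreover have "x \<le> 2^n - 1" using assms by simp
  ultimately show ?thesis by linarith
qed

lemma blk_lt: "r < K \<Longrightarrow> l < a \<Longrightarrow> l*K + r < a*(K::nat)"
proof -
  assume "r < K" "l < a"
  have "Suc l * K \<le> a*K" using \<open>l < a\<close> by (intro mult_le_mono1) simp
  thus ?thesis using \<open>r < K\<close> by simp
qed

theorem theorem1:
  fixes n s0 m :: nat
    and Aval :: "nat \<Rightarrow> complex"
    and S :: "nat \<Rightarrow> nat set"
    and c :: "nat \<Rightarrow> nat \<Rightarrow> nat"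
    and A Oc PREP UNPREP :: "complex mat"
    and \<alpha> :: real
  assumes n_ge: "n \<ge> 1"
    and s0_ge: "s0 \<ge> 1"
    and Aval_nz: "\<forall>l<s0. Aval l \<noteq> 0"
    and S_sub: "\<forall>l<s0. S l \<subseteq> {0..2^n-1}"
    and c_inj: "\<forall>l<s0. inj_on (c l) (S l)"
    and c_range: "\<forall>l<s0. c l ` S l \<subseteq> {0..2^n-1}"
    and distinct_pairs: "\<forall>l<s0. \<forall>l'<s0. \<forall>j\<in>S l. \<forall>j'\<in>S l'.
                           (c l j, j) = (c l' j', j') \<longrightarrow> l = l'"
    and A_carrier: "A \<in> carrier_mat (2^n) (2^n)"
    and A_def: "\<forall>i<2^n. \<forall>j<2^n.
                  A $$ (i,j) = (\<Sum>l<s0. \<Sum>j'\<in>S l.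
                     Aval l * (ket (2^n) (c l j') $ i) * (ket (2^n) j' $ j))"
    and m_def: "m = nat \<lceil>log 2 (real s0)\<rceil>"
    and Oc_unitary: "unitary_mat (2^m * 2 * 2^n) Oc"
    and Oc_action: "\<forall>l<2^m. \<forall>j<2^n.
          Oc *\<^sub>v ket (2^m * 2 * 2^n) (l * 2^(n+1) + 0 * 2^n + j) =
            (if l < s0 \<and> j \<in> S l
             then ket (2^m * 2 * 2^n) (l * 2^(n+1) + 0 * 2^n + c l j)
             else ket (2^m * 2 * 2^n) (l * 2^(n+1) + 1 * 2^n + j))"
    and alpha_def: "\<alpha> = (\<Sum>l<s0. cmod (Aval l))"
    and PREP_unitary: "unitary_mat (2^m) PREP"
    and UNPREP_unitary: "unitary_mat (2^m) UNPREP"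
    and PREP_action: "PREP *\<^sub>v ket (2^m) 0 =
          vec (2^m) (\<lambda>l. if l < s0 then csqrt (Aval l) / complex_of_real (sqrt \<alpha>) else 0)"
    and UNPREP_action: "mat_adjoint UNPREP *\<^sub>v ket (2^m) 0 =
          vec (2^m) (\<lambda>l. if l < s0 then cnj (csqrt (Aval l)) / complex_of_real (sqrt \<alpha>) else 0)"
  shows "mat_adjoint (anc_zero_iso (2^m * 2) (2^n))
           * (kron_id UNPREP (2^(n+1)) * Oc * kron_id PREP (2^(n+1)))
           * anc_zero_iso (2^m * 2) (2^n)
         = (1 / complex_of_real \<alpha>) \<cdot>\<^sub>m A"
proof -
  define K :: nat where "K = 2^(n+1)"
  define N :: nat where "N = 2^m * 2 * 2^n"
  have NK: "N = 2^m * K" unfolding N_def K_def by simp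
  have nK: "2^n < K" "2^n + 2^n = K" unfolding K_def by simp_all
  have s0m: "s0 \<le> 2^m"
  proof -
    have "log 2 (real s0) \<le> real m" unfolding m_def by linarith
    hence "real s0 \<le> 2 powr real m"
      using s0_ge by (simp add: log_le_iff)
    hence "real s0 \<le> real (2^m)" by (simp add: powr_realpow)
    thus ?thesis by linarith
  qed
  have alpha_pos: "\<alpha> > 0"
  proof -
    have "cmod (Aval 0) > 0" using Aval_nz s0_ge by simp
    moreover have "cmod (Aval 0) \<le> \<alpha>" unfolding alpha_def
      using s0_ge by (intro member_le_sum) auto
    ultimately show ?thesis by linarith
  qed
  have blk: "a*K+r = b*K+t \<longleftrightarrow> a = b \<and> r = t" if "r < K" "t < K" for a b r t
  proof
    assume h: "a*K+r = b*K+t"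
    have "(a*K+r) div K = a" "(a*K+r) mod K = r" "(b*K+t) div K = b" "(b*K+t) mod K = t"
      using that by auto
    thus "a = b \<and> r = t" using h by metis
  qed auto
  have PREPc: "PREP \<in> carrier_mat (2^m) (2^m)" and UNPREPc: "UNPREP \<in> carrier_mat (2^m) (2^m)"
    and Occ: "Oc \<in> carrier_mat N N"
    using PREP_unitary UNPREP_unitary Oc_unitary unfolding unitary_mat_def N_def by auto
  define sa where "sa l = (if l < s0 then csqrt (Aval l) / complex_of_real (sqrt \<alpha>) else 0)" for l
  have P0: "PREP $$ (l,0) = sa l" if "l < 2^m" for l
  proof -
    have "PREP $$ (l,0) = (PREP *\<^sub>v ket (2^m) 0) $ l"
      using mat_unit_index[OF PREPc that] by simp
    also have "\<dots> = sa l" using that unfolding PREP_action sa_def by simp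
    finally show ?thesis .
  qed
  have U0: "UNPREP $$ (0,l) = sa l" if "l < 2^m" for l
  proof -
    have d: "dim_row UNPREP = 2^m" "dim_col UNPREP = 2^m" using UNPREPc by auto
    have ac: "mat_adjoint UNPREP \<in> carrier_mat (2^m) (2^m)" unfolding carrier_mat_def
      using d adj_index(2,3)[of UNPREP] by simp
    have "cnj (UNPREP $$ (0,l)) = mat_adjoint UNPREP $$ (l,0)"
      using adj_index(1)[of l UNPREP 0] d that by simp
    also have "\<dots> = (mat_adjoint UNPREP *\<^sub>v ket (2^m) 0) $ l"
      using mat_unit_index[OF ac that] by simp
    also have "\<dots> = cnj (sa l)" using that unfolding UNPREP_action sa_def by simp
    finally show ?thesis by (metis complex_cnj_cnj)
  qed
  have Ocv: "Oc $$ (l'*K+i, l*K+j) = (if l < s0 \<and> j \<in> S l \<and> l' = l \<and> i = c l j then 1 else 0)"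
    if "l' < 2^m" "i < 2^n" "l < 2^m" "j < 2^n" for l' i l j
  proof -
    have lt: "l*K + j < N" "l'*K+i < N" unfolding NK using that nK blk_lt by (meson less_trans)+
    have "Oc $$ (l'*K+i, l*K+j) = (Oc *\<^sub>v ket N (l*K+j)) $ (l'*K+i)"
      using mat_unit_index[OF Occ lt(2) lt(1)] by simp
    also have "\<dots> = (if l < s0 \<and> j \<in> S l
             then ket N (l * K + c l j) else ket N (l * K + 2^n + j)) $ (l'*K+i)"
      using Oc_action that unfolding N_def K_def by simp
    also have "\<dots> = (if l < s0 \<and> j \<in> S l \<and> l' = l \<and> i = c l j then 1 else 0)"
    proof (cases "l < s0 \<and> j \<in> S l")
      case True
      have "c l j \<in> {0..2^n-1}" using c_range True by blast
      hence cr: "c l j < 2^n" by (rule lt_pow)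
      hence "l*K + c l j < N" unfolding NK using nK that blk_lt by (meson less_trans)
      then show ?thesis using True lt blk[of i "c l j" l' l] cr nK that by auto
    next
      case False
      have "l*K + (2^n + j) < N" unfolding NK using that nK blk_lt by simp
      then show ?thesis using False lt blk[of i "2^n+j" l' l] nK that by (auto simp: add.assoc)
    qed
    finally show ?thesis .
  qed

  have ifz1: "\<And>P a b. (if P then a else (0::complex)) * b = (if P then a*b else 0)" by simp
  have ifz2: "\<And>P a b. b * (if P then a else (0::complex)) = (if P then b*a else 0)" by simp
  define kU where "kU = kron_id UNPREP K"
  define kP where "kP = kron_id PREP K"
  define iso where "iso = anc_zero_iso (2^m * 2) (2^n)"
  have kUc: "kU \<in> carrier_mat N N" and kPc: "kP \<in> carrier_mat N N"
    using PREPc UNPREPc unfolding kU_def kP_def kron_id_def NK by auto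
  have isoc: "iso \<in> carrier_mat N (2^n)" unfolding iso_def anc_zero_iso_def N_def by auto
  have isoac: "mat_adjoint iso \<in> carrier_mat (2^n) N" using isoc adj_index(2,3)[of iso]
    unfolding carrier_mat_def by simp
  have kUv: "kU $$ (i, l*K+r) = (if i = r then sa l else 0)" if "i < 2^n" "l < 2^m" "r < K" for i l r
  proof -
    have "l*K+r < N" unfolding NK using that blk_lt by simp
    moreover have "i < N" using that nK unfolding NK
      by (metis blk_lt less_trans mult_zero_left add_0 zero_less_power zero_less_numeral)
    moreover have "(l*K+r) mod K = r" "(l*K+r) div K = l" using that by auto
    moreover have "i mod K = i" "i div K = 0" using that nK by auto
    ultimately show ?thesis using that U0 PREPc UNPREPc unfolding kU_def kron_id_def NK by auto
  qed
  have kPv: "kP $$ (l*K+r, j) = (if r = j then sa l else 0)" if "j < 2^n" "l < 2^m" "r < K" for j l r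
  proof -
    have "l*K+r < N" unfolding NK using that blk_lt by simp
    moreover have "j < N" using that nK unfolding NK
      by (metis blk_lt less_trans mult_zero_left add_0 zero_less_power zero_less_numeral)
    moreover have "(l*K+r) mod K = r" "(l*K+r) div K = l" using that by auto
    moreover have "j mod K = j" "j div K = 0" using that nK by auto
    ultimately show ?thesis using that P0 PREPc UNPREPc unfolding kP_def kron_id_def NK by auto
  qed
  define B where "B = (1 / complex_of_real \<alpha>) \<cdot>\<^sub>m A"
  have entry: "(mat_adjoint iso * (kU * Oc * kP) * iso) $$ (i,j) = B $$ (i,j)"
    if ij: "i < 2^n" "j < 2^n" for i j
  proof -
    have iN: "i < N" "j < N" using ij nK unfolding NK
      by (metis blk_lt less_trans mult_zero_left add_0 zero_less_power zero_less_numeral)+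
    define M where "M = kU * Oc * kP"
    have Mc: "M \<in> carrier_mat N N" unfolding M_def using kUc kPc Occ by auto
    have isov: "iso $$ (a, b) = (if a = b then 1 else 0)" if "a < N" "b < 2^n" for a b
      using that unfolding iso_def anc_zero_iso_def N_def by auto
    define X where "X = mat_adjoint iso * M"
    have Xc: "X \<in> carrier_mat (2^n) N" unfolding X_def using isoac Mc by simp
    have "(mat_adjoint iso * M * iso) $$ (i,j) = (\<Sum>b\<in>{0..<N}. X $$ (i,b) * iso $$ (b,j))"
      unfolding X_def[symmetric] using isoc Xc ij by (simp add: scalar_prod_def)
    also have "\<dots> = X $$ (i,j)"
      using iN ij by (simp add: isov if_distrib cong: if_cong)
    also have "\<dots> = (\<Sum>a\<in>{0..<N}. mat_adjoint iso $$ (i,a) * M $$ (a,j))"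
    proof -
      have d: "dim_row (mat_adjoint iso) = 2^n" "dim_col (mat_adjoint iso) = N" "dim_row M = N" "dim_col M = N"
        using isoac Mc by auto
      show ?thesis unfolding X_def using d ij iN by (simp add: scalar_prod_def)
    qed
    also have "\<dots> = (\<Sum>a\<in>{0..<N}. (if a = i then M $$ (a,j) else 0))"
      using isoc ij by (intro sum.cong refl) (auto simp: isov)
    also have "\<dots> = M $$ (i,j)" using iN by simp
    finally have s1: "(mat_adjoint iso * M * iso) $$ (i,j) = M $$ (i,j)" .
    have "M = kU * (Oc * kP)" unfolding M_def using kUc kPc Occ by (simp add: assoc_mult_mat)
    hence "M $$ (i,j) = (\<Sum>a<N. kU $$ (i,a) * (\<Sum>b<N. Oc $$ (a,b) * kP $$ (b,j)))"
      using kUc kPc Occ iN by (simp add: scalar_prod_def atLeast0LessThan)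
    also have "\<dots> = (\<Sum>l'<2^m. \<Sum>r<K. kU $$ (i,l'*K+r) * (\<Sum>l<2^m. \<Sum>t<K. Oc $$ (l'*K+r,l*K+t) * kP $$ (l*K+t,j)))"
      unfolding NK sum_split_blocks ..
    also have "\<dots> = (\<Sum>l'<2^m. sa l' * (\<Sum>l<2^m. Oc $$ (l'*K+i,l*K+j) * sa l))"
      using ij nK by (simp add: kUv kPv ifz1 ifz2 cong: if_cong)
    also have "\<dots> = (\<Sum>l'<2^m. sa l' * (if l' < s0 \<and> j \<in> S l' \<and> i = c l' j then sa l' else 0))"
    proof (intro sum.cong refl)
      fix l' assume "l' \<in> {..<(2::nat)^m}"
      hence l': "l' < 2^m" by simp
      have "(\<Sum>l<2^m. Oc $$ (l'*K+i,l*K+j) * sa l) =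
          (\<Sum>l<2^m. if l = l' then (if l' < s0 \<and> j \<in> S l' \<and> i = c l' j then sa l' else 0) else 0)"
        by (intro sum.cong refl) (auto simp: Ocv ij l')
      also have "\<dots> = (if l' < s0 \<and> j \<in> S l' \<and> i = c l' j then sa l' else 0)"
        using l' by simp
      finally show "sa l' * (\<Sum>l<2^m. Oc $$ (l'*K+i,l*K+j) * sa l) =
          sa l' * (if l' < s0 \<and> j \<in> S l' \<and> i = c l' j then sa l' else 0)" by simp
    qed
    also have "\<dots> = (\<Sum>l<s0. if j \<in> S l \<and> i = c l j then Aval l / complex_of_real \<alpha> else 0)"
    proof -
      have "(\<Sum>l'<2^m. sa l' * (if l' < s0 \<and> j \<in> S l' \<and> i = c l' j then sa l' else 0))
          = (\<Sum>l'<s0. sa l' * (if l' < s0 \<and> j \<in> S l' \<and> i = c l' j then sa l' else 0))"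
        using s0m by (intro sum.mono_neutral_right) auto
      also have "\<dots> = (\<Sum>l<s0. if j \<in> S l \<and> i = c l j then Aval l / complex_of_real \<alpha> else 0)"
      proof (intro sum.cong refl)
        fix l assume "l \<in> {..<s0}"
        hence "sa l * sa l = Aval l / complex_of_real \<alpha>" unfolding sa_def
          using alpha_pos by (simp add: power2_eq_square[symmetric] power_divide flip: of_real_power)
        thus "sa l * (if l < s0 \<and> j \<in> S l \<and> i = c l j then sa l else 0) =
           (if j \<in> S l \<and> i = c l j then Aval l / complex_of_real \<alpha> else 0)" using \<open>l \<in> {..<s0}\<close> by simp
      qed
      finally show ?thesis .
    qed
    also have "\<dots> = B $$ (i,j)"
    proof -
      have "B $$ (i,j) = (1 / complex_of_real \<alpha>) * A $$ (i,j)" unfolding B_def using A_carrier ij by simp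
      also have "\<dots> = (1 / complex_of_real \<alpha>) * (\<Sum>l<s0. if j \<in> S l \<and> i = c l j then Aval l else 0)"
      proof -
        have "A $$ (i,j) = (\<Sum>l<s0. if j \<in> S l \<and> i = c l j then Aval l else 0)"
          unfolding A_def[rule_format, OF ij]
        proof (intro sum.cong refl)
          fix l assume l: "l \<in> {..<s0}"
          have fin: "finite (S l)" using S_sub l by (meson finite_atLeastAtMost finite_subset lessThan_iff)
          have "(\<Sum>j'\<in>S l. Aval l * (ket (2^n) (c l j') $ i) * (ket (2^n) j' $ j))
              = (\<Sum>j'\<in>S l. if j' = j then (if i = c l j then Aval l else 0) else 0)"
          proof (intro sum.cong refl)
            fix j' assume j': "j' \<in> S l"
            have "c l j' \<in> {0..2^n-1}" "j' \<in> {0..2^n-1}" using c_range S_sub l j' by blast+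
            hence "c l j' < 2^n" "j' < 2^n" by (auto intro: lt_pow)
            thus "Aval l * (ket (2^n) (c l j') $ i) * (ket (2^n) j' $ j) = (if j' = j then (if i = c l j then Aval l else 0) else 0)"
              using ij by auto
          qed
          also have "\<dots> = (if j \<in> S l \<and> i = c l j then Aval l else 0)"
            using fin by (simp add: sum.delta')
          finally show "(\<Sum>j'\<in>S l. Aval l * (ket (2^n) (c l j') $ i) * (ket (2^n) j' $ j)) = (if j \<in> S l \<and> i = c l j then Aval l else 0)" .
        qed
        thus ?thesis by simp
      qed
      also have "\<dots> = (\<Sum>l<s0. if j \<in> S l \<and> i = c l j then Aval l / complex_of_real \<alpha> else 0)"
        by (simp add: sum_distrib_left if_distrib cong: if_cong)
      finally show ?thesis by simp
    qed
    finally show ?thesis using s1 unfolding M_def by simp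
  qed
  have Bc: "B \<in> carrier_mat (2^n) (2^n)" unfolding B_def using A_carrier by simp
  have "mat_adjoint iso * (kU * Oc * kP) * iso = B"
  proof (rule eq_matI)
    show "dim_row (mat_adjoint iso * (kU * Oc * kP) * iso) = dim_row B"
      using isoac isoc Bc by simp
    show "dim_col (mat_adjoint iso * (kU * Oc * kP) * iso) = dim_col B"
      using isoc Bc by simp
    fix i j assume "i < dim_row B" "j < dim_col B"
    thus "(mat_adjoint iso * (kU * Oc * kP) * iso) $$ (i,j) = B $$ (i,j)" using Bc entry by auto
  qed
  thus ?thesis unfolding kU_def kP_def iso_def B_def K_def .
qed

end
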